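(* Let $G$ be a connected $n$-vertex connected-domishold graph that is not complete. Let $\nu_c$ be the number of inclusion-minimal connected dominating sets of $G$ and $\nu_s$ the number of minimal cutsets of $G$. Then $\nu_s\le (n-2)\nu_c$ and $\nu_c\le (n-2)\nu_s$.
   Context: A connected dominating set of a connected graph $G$ is a set $S\subseteq V(G)$ such that every vertex outside $S$ has a neighbor in $S$ and $G[S]$ is connected. $G$ is connected-domishold if there exist $w:V(G)\to\mathbb{R}_{\ge0}$, $t\in\mathbb{R}_{\ge0}$ such that for all $S\subseteq V(G)$, $\sum_{x\in S}w(x)\ge t$ iff $S$ is a connected dominating set. A cutset is a set $S\subseteq V(G)$ such that $G-S$ is disconnected; it is minimal if it contains no other cutset. *)

theory Defs
  imports Complex_Main
begin

definition simple_graph :: "'a set \<Rightarrow> ('a \<Rightarrow> 'a \<Rightarrow> bool) \<Rightarrow> bool" where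
  "simple_graph V E \<longleftrightarrow> finite V \<and> (\<forall>x y. E x y \<longrightarrow> x \<in> V \<and> y \<in> V) \<and>
     (\<forall>x y. E x y \<longrightarrow> E y x) \<and> (\<forall>x. \<not> E x x)"

definition induced_connected :: "('a \<Rightarrow> 'a \<Rightarrow> bool) \<Rightarrow> 'a set \<Rightarrow> bool" where
  "induced_connected E S \<longleftrightarrow> S \<noteq> {} \<and>
     (\<forall>x\<in>S. \<forall>y\<in>S. (\<lambda>u v. E u v \<and> u \<in> S \<and> v \<in> S)\<^sup>*\<^sup>* x y)"

definition connected_graph :: "'a set \<Rightarrow> ('a \<Rightarrow> 'a \<Rightarrow> bool) \<Rightarrow> bool" where
  "connected_graph V E \<longleftrightarrow> induced_connected E V"

definition complete_graph :: "'a set \<Rightarrow> ('a \<Rightarrow> 'a \<Rightarrow> bool) \<Rightarrow> bool" where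
  "complete_graph V E \<longleftrightarrow> (\<forall>x\<in>V. \<forall>y\<in>V. x \<noteq> y \<longrightarrow> E x y)"

definition dominating :: "'a set \<Rightarrow> ('a \<Rightarrow> 'a \<Rightarrow> bool) \<Rightarrow> 'a set \<Rightarrow> bool" where
  "dominating V E S \<longleftrightarrow> S \<subseteq> V \<and> (\<forall>v\<in>V - S. \<exists>u\<in>S. E v u)"

definition connected_dominating_set :: "'a set \<Rightarrow> ('a \<Rightarrow> 'a \<Rightarrow> bool) \<Rightarrow> 'a set \<Rightarrow> bool" where
  "connected_dominating_set V E S \<longleftrightarrow> dominating V E S \<and> induced_connected E S"

definition minimal_cds :: "'a set \<Rightarrow> ('a \<Rightarrow> 'a \<Rightarrow> bool) \<Rightarrow> 'a set \<Rightarrow> bool" where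
  "minimal_cds V E S \<longleftrightarrow> connected_dominating_set V E S \<and>
     (\<forall>T. T \<subset> S \<longrightarrow> \<not> connected_dominating_set V E T)"

definition connected_domishold :: "'a set \<Rightarrow> ('a \<Rightarrow> 'a \<Rightarrow> bool) \<Rightarrow> bool" where
  "connected_domishold V E \<longleftrightarrow> (\<exists>(w::'a \<Rightarrow> real) (t::real).
     (\<forall>x\<in>V. w x \<ge> 0) \<and> t \<ge> 0 \<and>
     (\<forall>S. S \<subseteq> V \<longrightarrow> ((\<Sum>x\<in>S. w x) \<ge> t \<longleftrightarrow> connected_dominating_set V E S)))"

definition cutset :: "'a set \<Rightarrow> ('a \<Rightarrow> 'a \<Rightarrow> bool) \<Rightarrow> 'a set \<Rightarrow> bool" where
  "cutset V E S \<longleftrightarrow> S \<subseteq> V \<and> V - S \<noteq> {} \<and> \<not> induced_connected E (V - S)"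

definition minimal_cutset :: "'a set \<Rightarrow> ('a \<Rightarrow> 'a \<Rightarrow> bool) \<Rightarrow> 'a set \<Rightarrow> bool" where
  "minimal_cutset V E S \<longleftrightarrow> cutset V E S \<and> (\<forall>T. T \<subset> S \<longrightarrow> \<not> cutset V E T)"

end

theory Submission
  imports Defs "HOL-Library.Product_Lexorder"
begin


definition minT :: "'a set \<Rightarrow> ('a set \<Rightarrow> bool) \<Rightarrow> 'a set \<Rightarrow> bool" where
  "minT U P T \<longleftrightarrow> T \<subseteq> U \<and> P T \<and> (\<forall>T'. T' \<subset> T \<longrightarrow> \<not> P T')"

definition maxF :: "'a set \<Rightarrow> ('a set \<Rightarrow> bool) \<Rightarrow> 'a set \<Rightarrow> bool" where
  "maxF U P F \<longleftrightarrow> F \<subseteq> U \<and> \<not> P F \<and> (\<forall>F'. F \<subset> F' \<longrightarrow> F' \<subseteq> U \<longrightarrow> P F')"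

lemma ex_max_key:
  fixes key :: "'a \<Rightarrow> 'b::linorder"
  assumes "finite S" "S \<noteq> {}"
  shows "\<exists>j\<in>S. \<forall>y\<in>S. key y \<le> key j"
proof -
  have "Max (key ` S) \<in> key ` S" using assms by simp
  then obtain j where "j \<in> S" "key j = Max (key ` S)" by auto
  moreover have "\<forall>y\<in>S. key y \<le> Max (key ` S)" using assms by simp
  ultimately show ?thesis by metis
qed

lemma ex_min_key:
  fixes key :: "'a \<Rightarrow> 'b::linorder"
  assumes "finite S" "S \<noteq> {}"
  shows "\<exists>j\<in>S. \<forall>y\<in>S. key j \<le> key y"
proof -
  have "Min (key ` S) \<in> key ` S" using assms by simp
  then obtain j where "j \<in> S" "key j = Min (key ` S)" by auto
  moreover have "\<forall>y\<in>S. Min (key ` S) \<le> key y" using assms by simp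
  ultimately show ?thesis by metis
qed

lemma key_claim:
  fixes U :: "'a set" and P :: "'a set \<Rightarrow> bool" and key :: "'a \<Rightarrow> 'b::linorder"
  assumes fin: "finite U" and inj: "inj_on key U"
  and mono: "\<And>S S'. P S \<Longrightarrow> S \<subseteq> S' \<Longrightarrow> S' \<subseteq> U \<Longrightarrow> P S'"
  and reg: "\<And>S x y. S \<subseteq> U \<Longrightarrow> P S \<Longrightarrow> x \<in> S \<Longrightarrow> y \<in> U \<Longrightarrow> y \<notin> S \<Longrightarrow> key y < key x
            \<Longrightarrow> P (insert y (S - {x}))"
  and PU: "P U"
  and F: "maxF U P F"
  shows "\<exists>T j. minT U P T \<and> j \<in> T \<and>
     F = {x\<in>T. key x < key j} \<union> {y\<in>U. key j < key y}"
proof -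
  have injD: "\<And>a b. a \<in> U \<Longrightarrow> b \<in> U \<Longrightarrow> key a = key b \<Longrightarrow> a = b"
    using inj by (auto dest: inj_onD)
  have FU: "F \<subseteq> U" and nPF: "\<not> P F" and mx: "\<And>F'. F \<subset> F' \<Longrightarrow> F' \<subseteq> U \<Longrightarrow> P F'"
    using F unfolding maxF_def by auto
  have "U - F \<noteq> {}" using FU nPF PU by auto
  then obtain j where j: "j \<in> U - F" and jmax: "\<forall>y\<in>U - F. key y \<le> key j"
    using ex_max_key[of "U - F" key] fin by auto
  define A where "A = {x\<in>F. key x < key j}"
  have F_eq: "F = A \<union> {y\<in>U. key j < key y}"
  proof
    show "F \<subseteq> A \<union> {y\<in>U. key j < key y}"
    proof
      fix x assume x: "x \<in> F"
      have "key x \<noteq> key j" using x j FU injD by blast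
      thus "x \<in> A \<union> {y\<in>U. key j < key y}" using x FU unfolding A_def by auto
    qed
    show "A \<union> {y\<in>U. key j < key y} \<subseteq> F" using jmax unfolding A_def by force
  qed
  define S where "S = (\<lambda>y. A \<union> {z\<in>U. key j \<le> key z \<and> key z \<le> key y})"
  define Y where "Y = {y\<in>U. key j \<le> key y \<and> P (S y)}"
  have "U \<noteq> {}" using j by auto
  then obtain y0 where y0: "y0 \<in> U" "\<forall>y\<in>U. key y \<le> key y0"
    using ex_max_key[of U key] fin by auto
  have "S y0 = insert j F"
  proof -
    have "S y0 = A \<union> {z\<in>U. key j \<le> key z}" unfolding S_def using y0 by auto
    also have "\<dots> = insert j F" using F_eq j injD by (auto simp: le_less)
    finally show ?thesis .
  qed
  moreover have "P (insert j F)" using mx[of "insert j F"] j FU by auto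
  ultimately have "y0 \<in> Y" unfolding Y_def using y0 j by auto
  hence "Y \<noteq> {}" by auto
  moreover have "finite Y" using fin unfolding Y_def by auto
  ultimately obtain k where kY: "k \<in> Y" and kmin: "\<forall>y\<in>Y. key k \<le> key y"
    using ex_min_key[of Y key] by auto
  have kU: "k \<in> U" and jk: "key j \<le> key k" and PT: "P (S k)" using kY unfolding Y_def by auto
  define T where "T = S k"
  have AU: "A \<subseteq> U" using FU unfolding A_def by auto
  have TU: "T \<subseteq> U" unfolding T_def S_def using AU by auto
  have jT: "j \<in> T" unfolding T_def S_def using j jk by auto
  have kT: "k \<in> T" unfolding T_def S_def using kU jk by auto
  have Tle: "\<And>x. x \<in> T \<Longrightarrow> key x \<le> key k" unfolding T_def S_def A_def using jk by auto
  have recov: "F = {x\<in>T. key x < key j} \<union> {y\<in>U. key j < key y}"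
  proof -
    have "{x\<in>T. key x < key j} = A" unfolding T_def S_def A_def by auto
    thus ?thesis using F_eq by simp
  qed
  have nPTk: "\<not> P (T - {k})"
  proof (cases "k = j")
    case True
    have "T - {k} \<subseteq> A"
    proof
      fix z assume z: "z \<in> T - {k}"
      show "z \<in> A"
      proof (rule ccontr)
        assume "z \<notin> A"
        hence "z \<in> U" "key z = key j" using z True unfolding T_def S_def by auto
        thus False using z True injD j by auto
      qed
    qed
    moreover have "A \<subseteq> F" unfolding A_def by auto
    ultimately show ?thesis using mono nPF FU by blast
  next
    case False
    hence jk': "key j < key k" using jk injD j kU by (auto simp: le_less)
    define W where "W = {z\<in>U. key j \<le> key z \<and> key z < key k}"
    have "W \<noteq> {}" using j jk' unfolding W_def by auto
    moreover have "finite W" using fin unfolding W_def by auto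
    ultimately obtain k' where k'W: "k' \<in> W" and k'max: "\<forall>y\<in>W. key y \<le> key k'"
      using ex_max_key[of W key] by auto
    have Tk: "T - {k} = A \<union> W"
    proof
      show "T - {k} \<subseteq> A \<union> W"
      proof
        fix z assume z: "z \<in> T - {k}"
        show "z \<in> A \<union> W"
        proof (cases "z \<in> A")
          case False
          hence zz: "z \<in> U" "key j \<le> key z" "key z \<le> key k" using z unfolding T_def S_def by auto
          have "key z \<noteq> key k" using zz z kU injD by auto
          thus ?thesis using zz unfolding W_def by auto
        qed simp
      qed
      show "A \<union> W \<subseteq> T - {k}"
        unfolding T_def S_def W_def A_def using jk' by auto
    qed
    have Sk': "S k' = A \<union> W"
      unfolding S_def W_def using k'W k'max unfolding W_def by force
    show ?thesis
    proof
      assume "P (T - {k})"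
      hence "P (S k')" using Tk Sk' by simp
      hence "k' \<in> Y" using k'W unfolding Y_def W_def by auto
      hence "key k \<le> key k'" using kmin by auto
      thus False using k'W unfolding W_def by auto
    qed
  qed
  have minTT: "minT U P T"
    unfolding minT_def
  proof (intro conjI allI impI)
    show "T \<subseteq> U" by (fact TU)
    show "P T" using PT unfolding T_def .
    fix T' assume T': "T' \<subset> T"
    show "\<not> P T'"
    proof
      assume PT': "P T'"
      obtain x where x: "x \<in> T" "x \<notin> T'" using T' by auto
      have "T' \<subseteq> T - {x}" using T' x by auto
      hence Px: "P (T - {x})" using mono[OF PT'] TU by auto
      have "P (T - {k})"
      proof (cases "x = k")
        case True thus ?thesis using Px by simp
      next
        case False
        have "key x \<noteq> key k" using False x kT TU injD by auto
        hence lt: "key x < key k" using Tle[OF x(1)] by auto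
        have "P (insert x (T - {x} - {k}))"
          using reg[of "T - {x}" k x] Px TU x kT False lt by auto
        moreover have "insert x (T - {x} - {k}) = T - {k}" using x False by auto
        ultimately show ?thesis by simp
      qed
      thus False using nPTk by simp
    qed
  qed
  show ?thesis using minTT jT recov by blast
qed

lemma reg_count:
  fixes U :: "'a set" and P :: "'a set \<Rightarrow> bool" and key :: "'a \<Rightarrow> 'b::linorder"
  assumes fin: "finite U" and inj: "inj_on key U"
  and mono: "\<And>S S'. P S \<Longrightarrow> S \<subseteq> S' \<Longrightarrow> S' \<subseteq> U \<Longrightarrow> P S'"
  and reg: "\<And>S x y. S \<subseteq> U \<Longrightarrow> P S \<Longrightarrow> x \<in> S \<Longrightarrow> y \<in> U \<Longrightarrow> y \<notin> S \<Longrightarrow> key y < key x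
            \<Longrightarrow> P (insert y (S - {x}))"
  and PU: "P U"
  and bnd: "\<And>T. minT U P T \<Longrightarrow> card T \<le> m"
  shows "card {F. maxF U P F} \<le> m * card {T. minT U P T}"
proof -
  define g where "g = (\<lambda>(T, j). {x\<in>T. key x < key j} \<union> {y\<in>U. key j < key y})"
  define M where "M = {T. minT U P T}"
  have finM: "finite M" unfolding M_def minT_def
    by (rule finite_subset[of _ "Pow U"]) (use fin in auto)
  have finT: "\<forall>T\<in>M. finite T" unfolding M_def minT_def using fin finite_subset by blast
  have sub: "{F. maxF U P F} \<subseteq> g ` (SIGMA T:M. T)"
  proof
    fix F assume "F \<in> {F. maxF U P F}"
    hence "maxF U P F" by simp
    have "\<exists>T j. minT U P T \<and> j \<in> T \<and> F = {x\<in>T. key x < key j} \<union> {y\<in>U. key j < key y}"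
    proof (rule key_claim[of U key P F])
      show "\<And>S S'. P S \<Longrightarrow> S \<subseteq> S' \<Longrightarrow> S' \<subseteq> U \<Longrightarrow> P S'" by (rule mono)
      show "\<And>S x y. S \<subseteq> U \<Longrightarrow> P S \<Longrightarrow> x \<in> S \<Longrightarrow> y \<in> U \<Longrightarrow> y \<notin> S \<Longrightarrow> key y < key x
            \<Longrightarrow> P (insert y (S - {x}))" by (rule reg)
    qed (fact fin inj PU \<open>maxF U P F\<close>)+
    then obtain T j where "minT U P T" "j \<in> T" "F = {x\<in>T. key x < key j} \<union> {y\<in>U. key j < key y}"
      by blast
    thus "F \<in> g ` (SIGMA T:M. T)" unfolding g_def M_def by force
  qed
  have "card {F. maxF U P F} \<le> card (g ` (SIGMA T:M. T))"
    using sub finM finT by (intro card_mono) auto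
  also have "\<dots> \<le> card (SIGMA T:M. T)" using finM finT by (intro card_image_le) auto
  also have "\<dots> = (\<Sum>T\<in>M. card T)" using finM finT by simp
  also have "\<dots> \<le> card M * m" using sum_bounded_above[of M card m] bnd unfolding M_def by auto
  finally show ?thesis unfolding M_def by (simp add: mult.commute)
qed

lemma dual_count:
  assumes "\<And>S. P S \<Longrightarrow> S \<subseteq> U"
  shows "card {F. maxF U P F} = card {C. minT U (\<lambda>C. C \<subseteq> U \<and> \<not> P (U - C)) C}"
proof -
  have eq: "{F. maxF U P F} = (\<lambda>C. U - C) ` {C. minT U (\<lambda>C. C \<subseteq> U \<and> \<not> P (U - C)) C}"
  proof
    show "{F. maxF U P F} \<subseteq> (\<lambda>C. U - C) ` {C. minT U (\<lambda>C. C \<subseteq> U \<and> \<not> P (U - C)) C}"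
    proof
      fix F assume "F \<in> {F. maxF U P F}"
      hence F: "F \<subseteq> U" "\<not> P F" "\<And>F'. F \<subset> F' \<Longrightarrow> F' \<subseteq> U \<Longrightarrow> P F'"
        unfolding maxF_def by auto
      have "minT U (\<lambda>C. C \<subseteq> U \<and> \<not> P (U - C)) (U - F)"
        unfolding minT_def
      proof (intro conjI allI impI)
        show "\<not> P (U - (U - F))" using F by (simp add: double_diff)
        fix C' assume C': "C' \<subset> U - F"
        have "F \<subset> U - C'" using C' F(1) by auto
        thus "\<not> (C' \<subseteq> U \<and> \<not> P (U - C'))" using F(3) by auto
      qed auto
      moreover have "F = U - (U - F)" using F by auto
      ultimately show "F \<in> (\<lambda>C. U - C) ` {C. minT U (\<lambda>C. C \<subseteq> U \<and> \<not> P (U - C)) C}" by blast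
    qed
    show "(\<lambda>C. U - C) ` {C. minT U (\<lambda>C. C \<subseteq> U \<and> \<not> P (U - C)) C} \<subseteq> {F. maxF U P F}"
    proof
      fix F assume "F \<in> (\<lambda>C. U - C) ` {C. minT U (\<lambda>C. C \<subseteq> U \<and> \<not> P (U - C)) C}"
      then obtain C where F: "F = U - C" and C: "C \<subseteq> U" "\<not> P (U - C)"
        "\<And>C'. C' \<subset> C \<Longrightarrow> \<not> (C' \<subseteq> U \<and> \<not> P (U - C'))"
        unfolding minT_def by auto
      have "maxF U P F" unfolding maxF_def
      proof (intro conjI allI impI)
        fix F' assume F': "F \<subset> F'" "F' \<subseteq> U"
        have "U - F' \<subset> C" using F' F C(1) by auto
        hence "\<not> \<not> P (U - (U - F'))" using C(3)[of "U - F'"] by auto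
        thus "P F'" using F' by (simp add: double_diff)
      qed (use F C in auto)
      thus "F \<in> {F. maxF U P F}" by simp
    qed
  qed
  have "inj_on (\<lambda>C. U - C) {C. minT U (\<lambda>C. C \<subseteq> U \<and> \<not> P (U - C)) C}"
    unfolding minT_def by (rule inj_onI) auto
  thus ?thesis by (simp add: eq card_image)
qed

lemma dual_props:
  fixes key :: "'a \<Rightarrow> 'b::linorder"
  assumes mono: "\<And>S S'. P S \<Longrightarrow> S \<subseteq> S' \<Longrightarrow> S' \<subseteq> U \<Longrightarrow> P S'"
  and reg: "\<And>S x y. S \<subseteq> U \<Longrightarrow> P S \<Longrightarrow> x \<in> S \<Longrightarrow> y \<in> U \<Longrightarrow> y \<notin> S \<Longrightarrow> key y < key x
            \<Longrightarrow> P (insert y (S - {x}))"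
  and Q: "Q = (\<lambda>C. C \<subseteq> U \<and> \<not> P (U - C))"
  shows "\<And>S S'. Q S \<Longrightarrow> S \<subseteq> S' \<Longrightarrow> S' \<subseteq> U \<Longrightarrow> Q S'"
  and "\<And>S x y. S \<subseteq> U \<Longrightarrow> Q S \<Longrightarrow> x \<in> S \<Longrightarrow> y \<in> U \<Longrightarrow> y \<notin> S \<Longrightarrow> key y < key x
            \<Longrightarrow> Q (insert y (S - {x}))"
proof -
  fix S S' assume "Q S" "S \<subseteq> S'" "S' \<subseteq> U"
  thus "Q S'" unfolding Q using mono[of "U - S'" "U - S"] by auto
next
  fix S x y assume a: "S \<subseteq> U" "Q S" "x \<in> S" "y \<in> U" "y \<notin> S" "key y < key x"
  show "Q (insert y (S - {x}))" unfolding Q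
  proof (intro conjI notI)
    show "insert y (S - {x}) \<subseteq> U" using a by auto
    assume PR: "P (U - insert y (S - {x}))"
    have "P (insert y ((U - insert y (S - {x})) - {x}))"
      using reg[OF _ PR, of x y] a by auto
    moreover have "insert y ((U - insert y (S - {x})) - {x}) = U - S" using a by auto
    ultimately show False using a(2) unfolding Q by auto
  qed
qed



abbreviation RR :: "('a \<Rightarrow> 'a \<Rightarrow> bool) \<Rightarrow> 'a set \<Rightarrow> 'a \<Rightarrow> 'a \<Rightarrow> bool" where
  "RR E S \<equiv> (\<lambda>u v. E u v \<and> u \<in> S \<and> v \<in> S)"

lemma path_sym:
  assumes sym: "\<forall>x y. E x y \<longrightarrow> E y x" and p: "(RR E S)\<^sup>*\<^sup>* x y"
  shows "(RR E S)\<^sup>*\<^sup>* y x"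
  using p
proof (induction rule: rtranclp_induct)
  case (step y z)
  then show ?case using sym by (auto intro: converse_rtranclp_into_rtranclp)
qed simp

lemma path_mono:
  assumes p: "(RR E S)\<^sup>*\<^sup>* x y" and "S \<subseteq> S'"
  shows "(RR E S')\<^sup>*\<^sup>* x y"
  using p
proof (induction rule: rtranclp_induct)
  case (step y z)
  then show ?case using assms(2) by (auto intro: rtranclp.rtrancl_into_rtrancl)
qed simp

lemma path_cross:
  assumes p: "(RR E S)\<^sup>*\<^sup>* x y" and "x \<in> X" "y \<notin> X"
  shows "\<exists>a b. E a b \<and> a \<in> S \<and> b \<in> S \<and> a \<in> X \<and> b \<notin> X"
  using assms
proof (induction rule: rtranclp_induct)
  case (step y z)
  then show ?case by (cases "y \<in> X") auto
qed simp

lemma conn_extend: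
  assumes sym: "\<forall>x y. E x y \<longrightarrow> E y x"
  and c: "induced_connected E S" and sub: "S \<subseteq> S'"
  and nb: "\<forall>x\<in>S' - S. \<exists>u\<in>S. E x u"
  shows "induced_connected E S'"
proof -
  have S0: "S \<noteq> {}" using c unfolding induced_connected_def by auto
  have cS: "\<And>x y. x \<in> S \<Longrightarrow> y \<in> S \<Longrightarrow> (RR E S)\<^sup>*\<^sup>* x y"
    using c unfolding induced_connected_def by auto
  have reach: "\<exists>z\<in>S. (RR E S')\<^sup>*\<^sup>* x z" if x: "x \<in> S'" for x
  proof (cases "x \<in> S")
    case True thus ?thesis by auto
  next
    case False
    then obtain u where "u \<in> S" "E x u" using nb x by auto
    thus ?thesis using x sub by (auto intro!: bexI[of _ u])
  qed
  show ?thesis unfolding induced_connected_def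
  proof (intro conjI ballI)
    show "S' \<noteq> {}" using S0 sub by auto
    fix x y assume x: "x \<in> S'" and y: "y \<in> S'"
    obtain zx where zx: "zx \<in> S" "(RR E S')\<^sup>*\<^sup>* x zx" using reach[OF x] by auto
    obtain zy where zy: "zy \<in> S" "(RR E S')\<^sup>*\<^sup>* y zy" using reach[OF y] by auto
    have "(RR E S')\<^sup>*\<^sup>* zx zy" using path_mono[OF cS[OF zx(1) zy(1)] sub] .
    moreover have "(RR E S')\<^sup>*\<^sup>* zy y" using path_sym[OF sym zy(2)] .
    ultimately show "(RR E S')\<^sup>*\<^sup>* x y" using zx(2) by (meson rtranclp_trans)
  qed
qed

lemma cds_mono:
  assumes sg: "simple_graph V E" and c: "connected_dominating_set V E S"
  and "S \<subseteq> S'" "S' \<subseteq> V"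
  shows "connected_dominating_set V E S'"
proof -
  have sym: "\<forall>x y. E x y \<longrightarrow> E y x" using sg unfolding simple_graph_def by auto
  have d: "\<forall>v\<in>V - S. \<exists>u\<in>S. E v u" using c unfolding connected_dominating_set_def dominating_def by auto
  have "dominating V E S'" unfolding dominating_def using assms d by blast
  moreover have "induced_connected E S'"
    using conn_extend[OF sym _ \<open>S \<subseteq> S'\<close>] c d assms unfolding connected_dominating_set_def by blast
  ultimately show ?thesis unfolding connected_dominating_set_def by simp
qed

lemma nbr:
  assumes irr: "\<forall>x. \<not> E x x" and c: "induced_connected E S" and "v \<in> S" "w \<in> S" "v \<noteq> w"
  shows "\<exists>u\<in>S. u \<noteq> v \<and> E v u"
proof -
  have "(RR E S)\<^sup>*\<^sup>* v w" using c assms unfolding induced_connected_def by auto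
  thus ?thesis
  proof (cases rule: converse_rtranclpE)
    case base thus ?thesis using assms by simp
  next
    case (step u) thus ?thesis using irr by auto
  qed
qed

lemma noncut:
  assumes sym: "\<forall>x y. E x y \<longrightarrow> E y x" and fin: "finite S"
  and c: "induced_connected E S" and a: "a \<in> S" and b: "b \<in> S" "b \<noteq> a"
  shows "\<exists>v\<in>S. v \<noteq> a \<and> induced_connected E (S - {v})"
proof -
  define XX where "XX = {X. X \<subset> S \<and> a \<in> X \<and> induced_connected E X}"
  have "{a} \<in> XX" unfolding XX_def induced_connected_def using a b by auto
  hence ne: "XX \<noteq> {}" by auto
  have finXX: "finite XX" unfolding XX_def using fin by (auto intro: finite_subset[of _ "Pow S"])
  obtain X where X: "X \<in> XX" and Xmax: "\<forall>Y\<in>XX. card Y \<le> card X"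
    using ex_max_key[OF finXX ne, of card] by auto
  have XS: "X \<subset> S" "a \<in> X" "induced_connected E X" using X unfolding XX_def by auto
  show ?thesis
  proof (cases "\<exists>v. S - X = {v}")
    case True
    then obtain v where v: "S - X = {v}" by auto
    hence "X = S - {v}" using XS by auto
    moreover have "v \<noteq> a" using v XS by auto
    ultimately show ?thesis using v XS by auto
  next
    case False
    obtain y0 where y0: "y0 \<in> S" "y0 \<notin> X" using XS by auto
    obtain y1 where y1: "y1 \<in> S - X" "y1 \<noteq> y0" using False y0 by blast
    have "(RR E S)\<^sup>*\<^sup>* a y0" using c a y0 unfolding induced_connected_def by auto
    then obtain p q where pq: "E p q" "p \<in> S" "q \<in> S" "p \<in> X" "q \<notin> X"
      using path_cross[of E S a y0 X] XS y0 by blast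
    have cq: "induced_connected E (insert q X)"
      using conn_extend[OF sym XS(3), of "insert q X"] pq sym by auto
    obtain y where y: "y \<in> S - X" "y \<noteq> q" using y0 y1 by blast
    have "insert q X \<subset> S" using y pq XS by auto
    hence "insert q X \<in> XX" unfolding XX_def using cq XS by auto
    hence "card (insert q X) \<le> card X" using Xmax by auto
    moreover have "finite X" using XS fin finite_subset by auto
    ultimately show ?thesis using pq by simp
  qed
qed

lemma two_out:
  assumes "finite V" "S \<subseteq> V" "x \<in> V - S" "y \<in> V - S" "x \<noteq> y"
  shows "card S \<le> card V - 2"
proof -
  have "card {x, y} \<le> card (V - S)" using assms by (intro card_mono) auto
  hence "2 \<le> card (V - S)" using assms by simp
  moreover have "card (V - S) = card V - card S"
    using assms by (simp add: card_Diff_subset finite_subset)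
  moreover have "card S \<le> card V" using assms by (simp add: card_mono)
  ultimately show ?thesis by linarith
qed

lemma mincds_card:
  assumes sg: "simple_graph V E" and cg: "connected_graph V E"
  and nc: "\<not> complete_graph V E" and m: "minimal_cds V E S"
  shows "card S \<le> card V - 2"
proof -
  have sym: "\<forall>x y. E x y \<longrightarrow> E y x" and irr: "\<forall>x. \<not> E x x" and fin: "finite V"
    using sg unfolding simple_graph_def by auto
  have cds: "connected_dominating_set V E S" and mn: "\<And>T. T \<subset> S \<Longrightarrow> \<not> connected_dominating_set V E T"
    using m unfolding minimal_cds_def by auto
  have SV: "S \<subseteq> V" and cS: "induced_connected E S" and dS: "\<forall>v\<in>V - S. \<exists>u\<in>S. E v u"
    using cds unfolding connected_dominating_set_def dominating_def by auto
  have finS: "finite S" using SV fin finite_subset by auto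
  obtain p q where pq: "p \<in> V" "q \<in> V" "p \<noteq> q" "\<not> E p q" using nc unfolding complete_graph_def by auto
  have drop: False if v: "v \<in> S" "a \<in> S - {v}" "induced_connected E (S - {v})"
     "\<forall>z\<in>V - S. \<exists>u\<in>S - {v}. E z u" for v a
  proof -
    have "a \<in> S" "a \<noteq> v" using v by auto
    then obtain u where u: "u \<in> S" "u \<noteq> v" "E v u" using nbr[OF irr cS v(1), of a] by blast
    have "S - {v} \<subseteq> V" using SV by blast
    moreover have "\<forall>z\<in>V - (S - {v}). \<exists>u\<in>S - {v}. E z u"
    proof
      fix z assume z: "z \<in> V - (S - {v})"
      show "\<exists>u\<in>S - {v}. E z u"
      proof (cases "z = v")
        case True thus ?thesis using u by blast
      next
        case False
        hence "z \<in> V - S" using z by auto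
        thus ?thesis using v(4) by auto
      qed
    qed
    ultimately have "dominating V E (S - {v})" unfolding dominating_def by blast
    hence "connected_dominating_set V E (S - {v})" using v unfolding connected_dominating_set_def by auto
    thus False using mn[of "S - {v}"] v by auto
  qed
  consider "V - S = {}" | x where "V - S = {x}" | x y where "x \<in> V - S" "y \<in> V - S" "x \<noteq> y"
  proof (cases "V - S = {}")
    case False
    then obtain x where x: "x \<in> V - S" by auto
    show ?thesis
    proof (cases "\<exists>y\<in>V - S. y \<noteq> x")
      case True thus ?thesis using x that(3) by blast
    next
      case False
      hence "V - S = {x}" using x by blast
      thus ?thesis using that(2) by blast
    qed
  qed simp
  thus ?thesis
  proof cases
    case 1
    hence SV': "S = V" using SV by blast
    obtain v where v: "v \<in> S" "v \<noteq> p" "induced_connected E (S - {v})"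
      using noncut[OF sym finS cS, of p q] pq SV' by blast
    have "p \<in> S - {v}" using v pq SV' by blast
    moreover have "\<forall>z\<in>V - S. \<exists>u\<in>S - {v}. E z u" using 1 by blast
    ultimately show ?thesis using drop[of v p] v by blast
  next
    case 2
    then obtain a where a: "a \<in> S" "E x a" using dS by blast
    have "\<exists>b\<in>S. b \<noteq> a"
    proof (rule ccontr)
      assume "\<not> ?thesis"
      hence Sa: "S \<subseteq> {a}" by blast
      have "V \<subseteq> insert x S" using 2 by blast
      hence Vax: "V \<subseteq> {a, x}" using Sa by blast
      have "E a x" using a sym by blast
      hence "\<forall>u\<in>{a,x}. \<forall>w\<in>{a,x}. u \<noteq> w \<longrightarrow> E u w" using a(2) by simp
      thus False using pq Vax by blast
    qed
    then obtain b where b: "b \<in> S" "b \<noteq> a" by blast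
    obtain v where v: "v \<in> S" "v \<noteq> a" "induced_connected E (S - {v})"
      using noncut[OF sym finS cS a(1) b] by blast
    have "a \<in> S - {v}" using v a by blast
    moreover have "\<forall>z\<in>V - S. \<exists>u\<in>S - {v}. E z u"
    proof
      fix z assume "z \<in> V - S"
      hence "z = x" using 2 by blast
      thus "\<exists>u\<in>S - {v}. E z u" using a(2) \<open>a \<in> S - {v}\<close> by blast
    qed
    ultimately show ?thesis using drop[of v a] v by blast
  next
    case 3
    thus ?thesis using two_out[OF fin SV] by blast
  qed
qed

lemma mincut_card:
  assumes sg: "simple_graph V E" and m: "minimal_cutset V E C"
  shows "card C \<le> card V - 2"
proof -
  have fin: "finite V" using sg unfolding simple_graph_def by auto
  have "cutset V E C" using m unfolding minimal_cutset_def by blast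
  hence C: "C \<subseteq> V" "V - C \<noteq> {}" "\<not> induced_connected E (V - C)"
    unfolding cutset_def by auto
  obtain x where x: "x \<in> V - C" using C by auto
  have "\<exists>y\<in>V - C. y \<noteq> x"
  proof (rule ccontr)
    assume "\<not> ?thesis"
    hence "V - C = {x}" using x by blast
    moreover have "induced_connected E {x}" unfolding induced_connected_def by simp
    ultimately show False using C(3) by simp
  qed
  then obtain y where "y \<in> V - C" "y \<noteq> x" by auto
  thus ?thesis using two_out[OF fin C(1) x, of y] by auto
qed


lemma Qchar:
  assumes sg: "simple_graph V E" and cg: "connected_graph V E"
  and nc: "\<not> complete_graph V E" and CV: "C \<subseteq> V"
  shows "\<not> connected_dominating_set V E (V - C) \<longleftrightarrow> (\<exists>D\<subseteq>C. cutset V E D)"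
proof
  have sym: "\<forall>x y. E x y \<longrightarrow> E y x" and irr: "\<forall>x. \<not> E x x"
    using sg unfolding simple_graph_def by auto
  assume nd: "\<not> connected_dominating_set V E (V - C)"
  show "\<exists>D\<subseteq>C. cutset V E D"
  proof (cases "V - C = {}")
    case True
    obtain p q where pq: "p \<in> V" "q \<in> V" "p \<noteq> q" "\<not> E p q" using nc unfolding complete_graph_def by auto
    have "\<not> (RR E {p, q})\<^sup>*\<^sup>* p q"
    proof
      assume "(RR E {p, q})\<^sup>*\<^sup>* p q"
      then obtain a b where "E a b" "a \<in> {p,q}" "b \<in> {p,q}" "a \<in> {p}" "b \<notin> {p}"
        using path_cross[of E "{p,q}" p q "{p}"] pq by blast
      thus False using pq by auto
    qed
    moreover have eqpq: "V - (V - {p, q}) = {p, q}" using pq by blast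
    ultimately have "\<not> induced_connected E (V - (V - {p, q}))"
      unfolding induced_connected_def by (simp only: eqpq) blast
    moreover have "V - (V - {p, q}) \<noteq> {}" using eqpq by blast
    ultimately have "cutset V E (V - {p, q})" unfolding cutset_def by blast
    moreover have "V - {p, q} \<subseteq> C" using True by auto
    ultimately show ?thesis by blast
  next
    case False
    show ?thesis
    proof (cases "induced_connected E (V - C)")
      case False
      hence "cutset V E C" using CV \<open>V - C \<noteq> {}\<close> unfolding cutset_def by auto
      thus ?thesis by blast
    next
      case True
      then obtain v where v: "v \<in> C" "\<forall>u\<in>V - C. \<not> E v u"
        using nd CV unfolding connected_dominating_set_def dominating_def by auto
      obtain z where z: "z \<in> V - C" using \<open>V - C \<noteq> {}\<close> by auto
      have "\<not> (RR E (V - (C - {v})))\<^sup>*\<^sup>* v z"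
      proof
        assume "(RR E (V - (C - {v})))\<^sup>*\<^sup>* v z"
        moreover have "v \<in> {v}" "z \<notin> {v}" using z v by auto
        ultimately obtain a b where ab: "E a b" "a \<in> V - (C - {v})" "b \<in> V - (C - {v})" "a \<in> {v}" "b \<notin> {v}"
          using path_cross[of E "V - (C - {v})" v z "{v}"] by blast
        hence "a = v" "b \<in> V - C" by blast+
        thus False using v(2) ab(1) by blast
      qed
      moreover have "v \<in> V - (C - {v})" "z \<in> V - (C - {v})" using CV v z by blast+
      ultimately have "\<not> induced_connected E (V - (C - {v}))"
        unfolding induced_connected_def by blast
      hence "cutset V E (C - {v})" unfolding cutset_def using CV z by blast
      thus ?thesis by blast
    qed
  qed
next
  assume "\<exists>D\<subseteq>C. cutset V E D"
  then obtain D where D: "D \<subseteq> C" "cutset V E D" by auto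
  show "\<not> connected_dominating_set V E (V - C)"
  proof
    assume cc: "connected_dominating_set V E (V - C)"
    have "V - C \<subseteq> V - D" using D(1) by blast
    hence "connected_dominating_set V E (V - D)" using cds_mono[OF sg cc, of "V - D"] by blast
    thus False using D unfolding cutset_def connected_dominating_set_def by auto
  qed
qed



lemma minTQ_iff:
  assumes sg: "simple_graph V E" and cg: "connected_graph V E" and nc: "\<not> complete_graph V E"
  shows "minT V (\<lambda>C. C \<subseteq> V \<and> \<not> connected_dominating_set V E (V - C)) C \<longleftrightarrow> minimal_cutset V E C"
proof
  let ?Q = "\<lambda>C. C \<subseteq> V \<and> \<not> connected_dominating_set V E (V - C)"
  have Qc: "\<And>C. ?Q C \<longleftrightarrow> C \<subseteq> V \<and> (\<exists>D\<subseteq>C. cutset V E D)"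
  proof -
    fix C show "?Q C \<longleftrightarrow> C \<subseteq> V \<and> (\<exists>D\<subseteq>C. cutset V E D)"
      using Qchar[OF sg cg nc, of C] by (cases "C \<subseteq> V") simp_all
  qed
  {
    assume m: "minT V ?Q C"
    hence CV: "C \<subseteq> V" and QC: "?Q C" and mn: "\<And>C'. C' \<subset> C \<Longrightarrow> \<not> ?Q C'" unfolding minT_def by auto
    have "\<exists>D\<subseteq>C. cutset V E D" using QC Qc[of C] by simp
    then obtain D where D: "D \<subseteq> C" "cutset V E D" by blast
    have "D \<subseteq> V" using D CV by blast
    hence "?Q D" using Qc[of D] D by blast
    hence "D = C" using mn D(1) by blast
    moreover have "\<forall>T. T \<subset> C \<longrightarrow> \<not> cutset V E T"
    proof (intro allI impI notI)
      fix T assume "T \<subset> C" "cutset V E T"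
      hence "T \<subseteq> V" "\<exists>D\<subseteq>T. cutset V E D" using CV by blast+
      hence "?Q T" using Qc[of T] by simp
      thus False using mn \<open>T \<subset> C\<close> by blast
    qed
    ultimately show "minimal_cutset V E C" using D unfolding minimal_cutset_def by blast
  }
  {
    assume m: "minimal_cutset V E C"
    hence cC: "cutset V E C" and mn: "\<And>T. T \<subset> C \<Longrightarrow> \<not> cutset V E T"
      unfolding minimal_cutset_def by blast+
    have CV: "C \<subseteq> V" using cC unfolding cutset_def by blast
    have "\<exists>D\<subseteq>C. cutset V E D" using cC by blast
    hence "?Q C" using Qc[of C] CV by simp
    moreover have "\<forall>C'. C' \<subset> C \<longrightarrow> \<not> ?Q C'"
    proof (intro allI impI notI)
      fix C' assume "C' \<subset> C" "?Q C'"
      hence "\<exists>D\<subseteq>C'. cutset V E D" using Qc[of C'] by simp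
      then obtain D where "D \<subseteq> C'" "cutset V E D" by blast
      thus False using mn \<open>C' \<subset> C\<close> by blast
    qed
    ultimately show "minT V ?Q C" unfolding minT_def using CV by blast
  }
qed

theorem mainTheorem15:
  fixes V :: "'a set" and E :: "'a \<Rightarrow> 'a \<Rightarrow> bool" and n :: nat
  assumes "simple_graph V E"
    and "connected_graph V E"
    and "card V = n"
    and "connected_domishold V E"
    and "\<not> complete_graph V E"
  shows "card {S. minimal_cutset V E S} \<le> (n - 2) * card {S. minimal_cds V E S}
       \<and> card {S. minimal_cds V E S} \<le> (n - 2) * card {S. minimal_cutset V E S}"
proof -
  note sg = assms(1) and cg = assms(2) and nc = assms(5)
  have fin: "finite V" using sg unfolding simple_graph_def by blast
  obtain w :: "'a \<Rightarrow> real" and t where wt: "\<forall>S. S \<subseteq> V \<longrightarrow> (t \<le> (\<Sum>x\<in>S. w x) \<longleftrightarrow> connected_dominating_set V E S)"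
    using assms(4) unfolding connected_domishold_def by blast
  obtain r :: "'a \<Rightarrow> nat" where r: "inj_on r V" using finite_imp_inj_to_nat_seg[OF fin] by blast
  define key where "key = (\<lambda>x. (- w x, r x))"
  have inj: "inj_on key V" using r unfolding key_def inj_on_def by auto
  define P where "P = connected_dominating_set V E"
  define Q where "Q = (\<lambda>C. C \<subseteq> V \<and> \<not> P (V - C))"
  have PV: "\<And>S. P S \<Longrightarrow> S \<subseteq> V" unfolding P_def connected_dominating_set_def dominating_def by blast
  have monoP: "\<And>S S'. P S \<Longrightarrow> S \<subseteq> S' \<Longrightarrow> S' \<subseteq> V \<Longrightarrow> P S'"
    unfolding P_def using cds_mono[OF sg] by blast
  have regP: "\<And>S x y. S \<subseteq> V \<Longrightarrow> P S \<Longrightarrow> x \<in> S \<Longrightarrow> y \<in> V \<Longrightarrow> y \<notin> S \<Longrightarrow> key y < key x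
            \<Longrightarrow> P (insert y (S - {x}))"
  proof -
    fix S x y assume a: "S \<subseteq> V" "P S" "x \<in> S" "y \<in> V" "y \<notin> S" "key y < key x"
    have wxy: "w x \<le> w y" using a(6) unfolding key_def less_prod_def by auto
    have finS: "finite S" using a(1) fin finite_subset by blast
    have "t \<le> (\<Sum>z\<in>S. w z)" using wt a(1,2) unfolding P_def by blast
    moreover have "(\<Sum>z\<in>insert y (S - {x}). w z) = w y + ((\<Sum>z\<in>S. w z) - w x)"
      using finS a(3,5) by (simp add: sum_diff1)
    ultimately have "t \<le> (\<Sum>z\<in>insert y (S - {x}). w z)" using wxy by linarith
    moreover have "insert y (S - {x}) \<subseteq> V" using a by blast
    ultimately show "P (insert y (S - {x}))" using wt unfolding P_def by blast
  qed
  have PVV: "P V" unfolding P_def connected_dominating_set_def dominating_def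
    using cg unfolding connected_graph_def by blast
  have QV: "Q V" unfolding Q_def P_def connected_dominating_set_def induced_connected_def by simp
  have monoQ: "\<And>S S'. Q S \<Longrightarrow> S \<subseteq> S' \<Longrightarrow> S' \<subseteq> V \<Longrightarrow> Q S'"
    and regQ: "\<And>S x y. S \<subseteq> V \<Longrightarrow> Q S \<Longrightarrow> x \<in> S \<Longrightarrow> y \<in> V \<Longrightarrow> y \<notin> S \<Longrightarrow> key y < key x
            \<Longrightarrow> Q (insert y (S - {x}))"
  proof -
    fix S S' assume "Q S" "S \<subseteq> S'" "S' \<subseteq> V"
    thus "Q S'" unfolding Q_def using monoP[of "V - S'" "V - S"] by blast
  next
    fix S x y assume a: "S \<subseteq> V" "Q S" "x \<in> S" "y \<in> V" "y \<notin> S" "key y < key x"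
    show "Q (insert y (S - {x}))" unfolding Q_def
    proof (intro conjI notI)
      show "insert y (S - {x}) \<subseteq> V" using a by blast
      assume PR: "P (V - insert y (S - {x}))"
      have "V - insert y (S - {x}) \<subseteq> V" "x \<in> V - insert y (S - {x})" "y \<notin> V - insert y (S - {x})"
        using a by blast+
      hence "P (insert y ((V - insert y (S - {x})) - {x}))"
        using regP[OF _ PR, of x y] a(4,6) by blast
      moreover have "insert y ((V - insert y (S - {x})) - {x}) = V - S" using a by blast
      ultimately show False using a(2) unfolding Q_def by simp
    qed
  qed
  have QS: "\<And>S. Q S \<Longrightarrow> S \<subseteq> V" unfolding Q_def by blast
  have minP: "\<And>T. minT V P T \<longleftrightarrow> minimal_cds V E T"
    unfolding minT_def minimal_cds_def P_def using PV[unfolded P_def] by blast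
  have minQ: "\<And>T. minT V Q T \<longleftrightarrow> minimal_cutset V E T"
    unfolding Q_def P_def using minTQ_iff[OF sg cg nc] by blast
  have bndP: "\<And>T. minT V P T \<Longrightarrow> card T \<le> n - 2"
    using minP mincds_card[OF sg cg nc] assms(3) by blast
  have bndQ: "\<And>T. minT V Q T \<Longrightarrow> card T \<le> n - 2"
    using minQ mincut_card[OF sg] assms(3) by blast
  have eP: "{S. minimal_cds V E S} = {T. minT V P T}" using minP by blast
  have eQ: "{S. minimal_cutset V E S} = {T. minT V Q T}" using minQ by blast
  have d1: "card {F. maxF V P F} = card {T. minT V Q T}"
    using dual_count[of P V, OF PV] unfolding Q_def by simp
  have QQ: "(\<lambda>C. C \<subseteq> V \<and> \<not> Q (V - C)) = P"
  proof
    fix C show "(C \<subseteq> V \<and> \<not> Q (V - C)) = P C"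
      unfolding Q_def using PV by (auto simp: double_diff)
  qed
  have d2: "card {F. maxF V Q F} = card {T. minT V P T}"
    using dual_count[of Q V, OF QS] unfolding QQ by simp
  have i1: "card {F. maxF V P F} \<le> (n - 2) * card {T. minT V P T}"
    by (rule reg_count[OF fin inj]) (fact monoP regP PVV bndP)+
  have i2: "card {F. maxF V Q F} \<le> (n - 2) * card {T. minT V Q T}"
    by (rule reg_count[OF fin inj]) (fact monoQ regQ QV bndQ)+
  show ?thesis using i1 i2 d1 d2 eP eQ by simp
qed

end
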